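(* Let $d\ge2$, let $f$ be a contractive function on pairs of $d$-dimensional states which is, in addition, continuous. Let $(\Lambda_t)_{t\ge0}$ be any family of CPTP maps with $\Lambda_0=\mathrm{id}$, let $\rho,\sigma$ be states, and let $0=t_0<t_1<t_2<\dots$ be time steps such that the sequence $f_i:=f(\Lambda_{t_i}[\rho],\Lambda_{t_i}[\sigma])$ is non-increasing in $i$. Then there exist parameters $a_i\in[0,1]$ such that, with the CPTP (depolarizing) maps $W_{t_{i+1},t_i}[X]=a_i^{\,t_{i+1}-t_i}X+(1-a_i^{\,t_{i+1}-t_i})\,\mathrm{Tr}(X)\frac{\mathbb 1_d}{d}$ and the states $\mu_0=\rho$, $\tau_0=\sigma$, $\mu_{i+1}=W_{t_{i+1},t_i}[\mu_i]$, $\tau_{i+1}=W_{t_{i+1},t_i}[\tau_i]$, one has $f(\mu_i,\tau_i)=f_i$ for all $i$. In other words, any non-increasing profile of a contractive function can be reproduced by a CP-divisible (Markovian) evolution.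
   Context: A function $f(\rho,\sigma)$ is contractive if $f(\Lambda[\rho],\Lambda[\sigma])\le f(\rho,\sigma)$ for every CPTP map $\Lambda$ and all states $\rho,\sigma$. *)

theory Defs
  imports Complex_Main "Jordan_Normal_Form.Matrix"
begin

(* Operators on d x d complex matrices are modelled as functions complex mat => complex mat;
   only their values on carrier_mat d d matter. *)

definition mtrace :: "complex mat \<Rightarrow> complex" where
  "mtrace A = (\<Sum>i<dim_row A. A $$ (i, i))"

definition psd :: "nat \<Rightarrow> complex mat \<Rightarrow> bool" where
  "psd n A \<longleftrightarrow> A \<in> carrier_mat n n \<and>
     (\<forall>v :: nat \<Rightarrow> complex.
        let q = (\<Sum>i<n. \<Sum>j<n. cnj (v i) * A $$ (i, j) * v j) in Im q = 0 \<and> Re q \<ge> 0)"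

definition is_state :: "nat \<Rightarrow> complex mat \<Rightarrow> bool" where
  "is_state d \<rho> \<longleftrightarrow> psd d \<rho> \<and> mtrace \<rho> = 1"

definition lin_map :: "nat \<Rightarrow> (complex mat \<Rightarrow> complex mat) \<Rightarrow> bool" where
  "lin_map d L \<longleftrightarrow>
     (\<forall>X \<in> carrier_mat d d. L X \<in> carrier_mat d d) \<and>
     (\<forall>X \<in> carrier_mat d d. \<forall>Y \<in> carrier_mat d d. L (X + Y) = L X + L Y) \<and>
     (\<forall>c. \<forall>X \<in> carrier_mat d d. L (c \<cdot>\<^sub>m X) = c \<cdot>\<^sub>m L X)"

(* (id_k \<otimes> L) applied to a (d*k) x (d*k) matrix, viewed as a k x k array of d x d blocks *)
definition block_mat :: "nat \<Rightarrow> complex mat \<Rightarrow> nat \<Rightarrow> nat \<Rightarrow> complex mat" where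
  "block_mat d X a b = mat d d (\<lambda>(i, j). X $$ (a * d + i, b * d + j))"

definition ampl :: "nat \<Rightarrow> nat \<Rightarrow> (complex mat \<Rightarrow> complex mat) \<Rightarrow> complex mat \<Rightarrow> complex mat" where
  "ampl d k L X = mat (k * d) (k * d)
      (\<lambda>(p, q). L (block_mat d X (p div d) (q div d)) $$ (p mod d, q mod d))"

definition completely_positive :: "nat \<Rightarrow> (complex mat \<Rightarrow> complex mat) \<Rightarrow> bool" where
  "completely_positive d L \<longleftrightarrow>
     (\<forall>k. \<forall>X. psd (k * d) X \<longrightarrow> psd (k * d) (ampl d k L X))"

definition trace_preserving :: "nat \<Rightarrow> (complex mat \<Rightarrow> complex mat) \<Rightarrow> bool" where
  "trace_preserving d L \<longleftrightarrow> (\<forall>X \<in> carrier_mat d d. mtrace (L X) = mtrace X)"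

definition CPTP :: "nat \<Rightarrow> (complex mat \<Rightarrow> complex mat) \<Rightarrow> bool" where
  "CPTP d L \<longleftrightarrow> lin_map d L \<and> completely_positive d L \<and> trace_preserving d L"

definition contractive :: "nat \<Rightarrow> (complex mat \<Rightarrow> complex mat \<Rightarrow> real) \<Rightarrow> bool" where
  "contractive d f \<longleftrightarrow>
     (\<forall>L \<rho> \<sigma>. CPTP d L \<longrightarrow> is_state d \<rho> \<longrightarrow> is_state d \<sigma> \<longrightarrow> f (L \<rho>) (L \<sigma>) \<le> f \<rho> \<sigma>)"

(* entrywise l1 distance; all norms on d x d matrices are equivalent *)
definition mdist :: "nat \<Rightarrow> complex mat \<Rightarrow> complex mat \<Rightarrow> real" where
  "mdist d X Y = (\<Sum>i<d. \<Sum>j<d. cmod (X $$ (i, j) - Y $$ (i, j)))"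

definition continuous_on_states :: "nat \<Rightarrow> (complex mat \<Rightarrow> complex mat \<Rightarrow> real) \<Rightarrow> bool" where
  "continuous_on_states d f \<longleftrightarrow>
     (\<forall>\<rho> \<sigma>. is_state d \<rho> \<longrightarrow> is_state d \<sigma> \<longrightarrow>
        (\<forall>e > 0. \<exists>\<delta> > 0. \<forall>\<rho>' \<sigma>'. is_state d \<rho>' \<longrightarrow> is_state d \<sigma>' \<longrightarrow>
            mdist d \<rho>' \<rho> < \<delta> \<longrightarrow> mdist d \<sigma>' \<sigma> < \<delta> \<longrightarrow> \<bar>f \<rho>' \<sigma>' - f \<rho> \<sigma>\<bar> < e))"

definition depol :: "nat \<Rightarrow> real \<Rightarrow> real \<Rightarrow> complex mat \<Rightarrow> complex mat" where
  "depol d a s X = complex_of_real (a powr s) \<cdot>\<^sub>m X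
      + (complex_of_real (1 - a powr s) * mtrace X / of_nat d) \<cdot>\<^sub>m (1\<^sub>m d)"

fun depol_evol :: "nat \<Rightarrow> (nat \<Rightarrow> real) \<Rightarrow> (nat \<Rightarrow> real) \<Rightarrow> complex mat \<Rightarrow> nat \<Rightarrow> complex mat" where
  "depol_evol d a t X0 0 = X0"
| "depol_evol d a t X0 (Suc i) = depol d (a i) (t (Suc i) - t i) (depol_evol d a t X0 i)"

end

theory Submission
  imports Defs
begin

definition qf :: "nat \<Rightarrow> complex mat \<Rightarrow> (nat \<Rightarrow> complex) \<Rightarrow> complex" where
  "qf n A v = (\<Sum>i<n. \<Sum>j<n. cnj (v i) * A $$ (i, j) * v j)"

lemma psd_iff: "psd n A \<longleftrightarrow> A \<in> carrier_mat n n \<and> (\<forall>v. Im (qf n A v) = 0 \<and> Re (qf n A v) \<ge> 0)"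
  unfolding psd_def qf_def Let_def by simp

lemma qf_add: "A \<in> carrier_mat n n \<Longrightarrow> B \<in> carrier_mat n n \<Longrightarrow> qf n (A + B) v = qf n A v + qf n B v"
  unfolding qf_def by (simp add: sum.distrib[symmetric] algebra_simps)

lemma qf_smult: "A \<in> carrier_mat n n \<Longrightarrow> qf n (c \<cdot>\<^sub>m A) v = c * qf n A v"
  unfolding qf_def by (simp add: sum_distrib_left algebra_simps)

lemma qf_one: "qf n (1\<^sub>m n) v = of_real (\<Sum>i<n. (cmod (v i))^2)"
proof -
  have "qf n (1\<^sub>m n) v = (\<Sum>i<n. cnj (v i) * v i)"
    unfolding qf_def by (simp add: if_distrib[of "\<lambda>x. _ * x * _"] cong: if_cong)
  also have "\<dots> = (\<Sum>i<n. of_real ((cmod (v i))^2))"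
    by (rule sum.cong) (auto simp: complex_norm_square[symmetric] mult.commute)
  finally show ?thesis by simp
qed

lemma mtrace_add: "A \<in> carrier_mat n n \<Longrightarrow> B \<in> carrier_mat n n \<Longrightarrow> mtrace (A + B) = mtrace A + mtrace B"
  unfolding mtrace_def by (simp add: sum.distrib)

lemma mtrace_smult: "A \<in> carrier_mat n n \<Longrightarrow> mtrace (c \<cdot>\<^sub>m A) = c * mtrace A"
  unfolding mtrace_def by (simp add: sum_distrib_left)

lemma mtrace_one: "mtrace (1\<^sub>m n) = of_nat n"
  unfolding mtrace_def by simp

lemma depol_carrier: "X \<in> carrier_mat d d \<Longrightarrow> depol d a s X \<in> carrier_mat d d"
  unfolding depol_def by simp

lemma depol_state:
  assumes "is_state d X" "0 \<le> a" "a \<le> 1" "d > 0" "s \<ge> 0"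
  shows "is_state d (depol d a s X)"
proof -
  have X: "X \<in> carrier_mat d d" and tr: "mtrace X = 1" and q: "\<And>v. Im (qf d X v) = 0 \<and> Re (qf d X v) \<ge> 0"
    using assms(1) unfolding is_state_def psd_iff by auto
  let ?p = "a powr s"
  have p0: "0 \<le> ?p" and p1: "?p \<le> 1" using assms powr_mono2[of s a 1] by auto
  have "psd d (depol d a s X)"
    unfolding psd_iff
  proof (intro conjI allI)
    show "depol d a s X \<in> carrier_mat d d" using X by (rule depol_carrier)
    fix v
    have e: "qf d (depol d a s X) v = of_real ?p * qf d X v + of_real ((1 - ?p) / d * (\<Sum>i<d. (cmod (v i))^2))"
      using X tr unfolding depol_def
      by (simp add: qf_add qf_smult qf_one)
    show "Im (qf d (depol d a s X) v) = 0" using q[of v] unfolding e by simp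
    show "Re (qf d (depol d a s X) v) \<ge> 0" using q[of v] p0 p1 unfolding e
      by (simp add: sum_nonneg)
  qed
  moreover have "mtrace (depol d a s X) = 1"
    using X tr assms(4) unfolding depol_def
    by (subst mtrace_add[of _ d]) (auto simp: mtrace_smult[of "1\<^sub>m d" d] mtrace_smult[of X d] mtrace_one)
  ultimately show ?thesis unfolding is_state_def by simp
qed


lemma sum_blocks: "(\<Sum>p<k*d. F p) = (\<Sum>a<k. \<Sum>m<d. F (a*d+m :: nat) :: 'b::comm_monoid_add)"
proof (induction k)
  case 0 then show ?case by simp
next
  case (Suc k)
  have "(\<Sum>p<Suc k*d. F p) = (\<Sum>p\<in>{0..<k*d}. F p) + (\<Sum>p\<in>{k*d..<k*d+d}. F p)"
    by (simp add: sum.atLeastLessThan_concat lessThan_atLeast0 add.commute)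
  also have "(\<Sum>p\<in>{k*d..<k*d+d}. F p) = (\<Sum>m<d. F (k*d+m))"
    using sum.shift_bounds_nat_ivl[of F 0 "k*d" d] by (simp add: lessThan_atLeast0 ac_simps)
  finally show ?case using Suc by (simp add: lessThan_atLeast0)
qed

definition R :: "nat \<Rightarrow> complex mat \<Rightarrow> complex mat" where
  "R d X = (mtrace X / of_nat d) \<cdot>\<^sub>m 1\<^sub>m d"

lemma R_entry: "i < d \<Longrightarrow> j < d \<Longrightarrow> R d X $$ (i,j) = (if i = j then mtrace X / of_nat d else 0)"
  unfolding R_def by simp

lemma mtrace_block: "mtrace (block_mat d X a b) = (\<Sum>l<d. X $$ (a*d+l, b*d+l))"
  unfolding mtrace_def block_mat_def by simp

lemma R_cp: assumes "d > 0" shows "completely_positive d (R d)"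
  unfolding completely_positive_def
proof (intro allI impI)
  fix k X assume psdX: "psd (k*d) X"
  have qX: "\<And>w. Im (qf (k*d) X w) = 0 \<and> Re (qf (k*d) X w) \<ge> 0" using psdX unfolding psd_iff by auto
  show "psd (k*d) (ampl d k (R d) X)"
    unfolding psd_iff
  proof (intro conjI allI)
    show "ampl d k (R d) X \<in> carrier_mat (k*d) (k*d)" unfolding ampl_def by simp
    fix v
    define G where "G a m b l = cnj (v (a*d+m)) * X $$ (a*d+l, b*d+l) * v (b*d+m)" for a m b l
    define w where "w m l j = (if j mod d = l then v (j div d * d + m) else 0)" for m l j
    have step1: "qf (k*d) (ampl d k (R d) X) v = (\<Sum>a<k. \<Sum>m<d. \<Sum>b<k. \<Sum>n<d.
        cnj (v (a*d+m)) * (if m = n then mtrace (block_mat d X a b) / of_nat d else 0) * v (b*d+n))"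
    proof -
      have "qf (k*d) (ampl d k (R d) X) v = (\<Sum>p<k*d. \<Sum>q<k*d. cnj (v p) * R d (block_mat d X (p div d) (q div d)) $$ (p mod d, q mod d) * v q)"
        unfolding qf_def ampl_def
        by (intro sum.cong refl) auto
      also have "\<dots> = (\<Sum>a<k. \<Sum>m<d. \<Sum>b<k. \<Sum>n<d.
        cnj (v (a*d+m)) * (if m = n then mtrace (block_mat d X a b) / of_nat d else 0) * v (b*d+n))"
        unfolding sum_blocks using assms
        by (intro sum.cong refl) (simp add: R_entry)
      finally show ?thesis .
    qed
    also have "\<dots> = (\<Sum>a<k. \<Sum>m<d. \<Sum>b<k. \<Sum>l<d. G a m b l / of_nat d)"
    proof -
     have inner: "(\<Sum>n<d. cnj (v (a*d+m)) * (if m = n then mtrace (block_mat d X a b) / of_nat d else 0) * v (b*d+n))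
          = (\<Sum>l<d. G a m b l / of_nat d)" if m: "m \<in> {..<d}" for a m b
     proof -
      have "(\<Sum>n<d. cnj (v (a*d+m)) * (if m = n then mtrace (block_mat d X a b) / of_nat d else 0) * v (b*d+n))
          = (\<Sum>n<d. if m = n then cnj (v (a*d+m)) * (mtrace (block_mat d X a b) / of_nat d) * v (b*d+n) else 0)"
        by (intro sum.cong refl) auto
      also have "\<dots> = cnj (v (a*d+m)) * (mtrace (block_mat d X a b) / of_nat d) * v (b*d+m)"
        using m by (simp add: sum.delta)
      also have "\<dots> = (\<Sum>l<d. G a m b l / of_nat d)"
        unfolding mtrace_block G_def by (simp add: sum_distrib_left sum_distrib_right sum_divide_distrib algebra_simps)
      finally show "(\<Sum>n<d. cnj (v (a*d+m)) * (if m = n then mtrace (block_mat d X a b) / of_nat d else 0) * v (b*d+n))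
          = (\<Sum>l<d. G a m b l / of_nat d)" .
     qed
     show ?thesis by (simp add: inner)
    qed
    also have "\<dots> = (\<Sum>m<d. \<Sum>a<k. \<Sum>b<k. \<Sum>l<d. G a m b l / of_nat d)"
      by (rule sum.swap)
    also have "\<dots> = (\<Sum>m<d. \<Sum>a<k. \<Sum>l<d. \<Sum>b<k. G a m b l / of_nat d)"
      by (intro sum.cong refl sum.swap)
    also have "\<dots> = (\<Sum>m<d. \<Sum>l<d. \<Sum>a<k. \<Sum>b<k. G a m b l / of_nat d)"
      by (intro sum.cong refl sum.swap)
    also have "\<dots> = (\<Sum>m<d. \<Sum>l<d. qf (k*d) X (w m l) / of_nat d)"
    proof (intro sum.cong refl)
      fix m l assume m: "m \<in> {..<d}" and l: "l \<in> {..<d}"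
      have "qf (k*d) X (w m l) = (\<Sum>a<k. \<Sum>m'<d. \<Sum>b<k. \<Sum>n'<d.
            cnj (w m l (a*d+m')) * X $$ (a*d+m', b*d+n') * w m l (b*d+n'))"
        by (simp only: qf_def sum_blocks)
      also have "\<dots> = (\<Sum>a<k. \<Sum>m'<d. if m' = l then (\<Sum>b<k. \<Sum>n'<d.
            if n' = l then G a m b l else 0) else 0)"
      proof (intro sum.cong refl)
        fix a m' assume m': "m' \<in> {..<d}"
        show "(\<Sum>b<k. \<Sum>n'<d. cnj (w m l (a*d+m')) * X $$ (a*d+m', b*d+n') * w m l (b*d+n'))
           = (if m' = l then (\<Sum>b<k. \<Sum>n'<d. if n' = l then G a m b l else 0) else 0)"
        proof (cases "m' = l")
          case True
          have "(\<Sum>b<k. \<Sum>n'<d. cnj (w m l (a*d+m')) * X $$ (a*d+m', b*d+n') * w m l (b*d+n'))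
             = (\<Sum>b<k. \<Sum>n'<d. if n' = l then G a m b l else 0)"
            by (intro sum.cong refl) (use True assms m' in \<open>auto simp: w_def G_def\<close>)
          then show ?thesis using True by simp
        next
          case False
          then show ?thesis unfolding w_def G_def using assms m' by (auto intro!: sum.neutral)
        qed
      qed
      also have "\<dots> = (\<Sum>a<k. \<Sum>b<k. G a m b l)"
        using l by (simp add: sum.delta')
      finally show "(\<Sum>a<k. \<Sum>b<k. G a m b l / of_nat d) = qf (k*d) X (w m l) / of_nat d"
        by (simp add: sum_divide_distrib)
    qed
    finally have e: "qf (k*d) (ampl d k (R d) X) v = (\<Sum>m<d. \<Sum>l<d. qf (k*d) X (w m l) / of_nat d)" .
    have im: "\<And>m l. Im (qf (k*d) X (w m l) / of_nat d) = 0" using qX by simp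
    have re: "\<And>m l. Re (qf (k*d) X (w m l) / of_nat d) \<ge> 0" using qX by simp
    show "Im (qf (k*d) (ampl d k (R d) X) v) = 0" unfolding e Im_sum by (simp add: qX)
    show "Re (qf (k*d) (ampl d k (R d) X) v) \<ge> 0" unfolding e Re_sum by (intro sum_nonneg) (simp add: qX)
  qed
qed


lemma R_carrier: "R d (X::complex mat) \<in> carrier_mat d d" unfolding R_def by simp

lemma R_CPTP: assumes "d > 0" shows "CPTP d (R d)"
  unfolding CPTP_def
proof (intro conjI)
  show "completely_positive d (R d)" using assms by (rule R_cp)
  show "lin_map d (R d)" unfolding lin_map_def
  proof (intro conjI ballI allI)
    fix X :: "complex mat" assume "X \<in> carrier_mat d d" show "R d X \<in> carrier_mat d d" by (rule R_carrier)
  next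
    fix X Y :: "complex mat" assume X: "X \<in> carrier_mat d d" and Y: "Y \<in> carrier_mat d d"
    show "R d (X + Y) = R d X + R d Y"
      by (rule eq_matI) (auto simp: R_def mtrace_add[OF X Y] add_divide_distrib)
  next
    fix c and X :: "complex mat" assume X: "X \<in> carrier_mat d d"
    show "R d (c \<cdot>\<^sub>m X) = c \<cdot>\<^sub>m R d X"
      by (rule eq_matI) (auto simp: R_def mtrace_smult[OF X])
  qed
  show "trace_preserving d (R d)" unfolding trace_preserving_def
    using assms by (auto simp: R_def mtrace_smult[of "1\<^sub>m d" d] mtrace_one)
qed

lemma depol0: "s > 0 \<Longrightarrow> X \<in> carrier_mat d d \<Longrightarrow> depol d 0 s X = R d X"
  unfolding depol_def R_def by (rule eq_matI) auto

lemma depol1: "X \<in> carrier_mat d d \<Longrightarrow> depol d 1 s X = X"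
  unfolding depol_def by (rule eq_matI) auto

lemma CPTP_state: assumes "CPTP d L" "is_state d X" shows "is_state d (L X)"
proof -
  have X: "X \<in> carrier_mat d d" using assms(2) unfolding is_state_def psd_def by auto
  have LX: "L X \<in> carrier_mat d d" using assms(1) X unfolding CPTP_def lin_map_def by auto
  have bl: "block_mat d X 0 0 = X" unfolding block_mat_def using X by (intro eq_matI) auto
  have "ampl d 1 L X = L X" unfolding ampl_def using LX bl by (intro eq_matI) auto
  moreover have "psd (1*d) (ampl d 1 L X)"
    using assms unfolding CPTP_def completely_positive_def is_state_def by (metis mult_1)
  moreover have "mtrace (L X) = 1" using assms X unfolding CPTP_def trace_preserving_def is_state_def by auto
  ultimately show ?thesis unfolding is_state_def by simp
qed

lemma mdist_depol:
  assumes "X \<in> carrier_mat d d"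
  shows "mdist d (depol d a s X) (depol d b s X) = \<bar>a powr s - b powr s\<bar> * mdist d X ((mtrace X / of_nat d) \<cdot>\<^sub>m 1\<^sub>m d)"
  unfolding mdist_def sum_distrib_left
proof (intro sum.cong refl)
  fix i j assume "i \<in> {..<d}" "j \<in> {..<d}"
  then have ij: "i < d" "j < d" by auto
  have "depol d a s X $$ (i, j) - depol d b s X $$ (i, j)
     = complex_of_real (a powr s - b powr s) * (X $$ (i,j) - ((mtrace X / of_nat d) \<cdot>\<^sub>m 1\<^sub>m d) $$ (i,j))"
    using ij assms unfolding depol_def by (simp add: algebra_simps diff_divide_distrib)
  then show "cmod (depol d a s X $$ (i, j) - depol d b s X $$ (i, j)) =
    \<bar>a powr s - b powr s\<bar> * cmod (X $$ (i, j) - ((mtrace X / of_nat d) \<cdot>\<^sub>m 1\<^sub>m d) $$ (i, j))"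
    by (simp add: norm_mult del: of_real_diff flip: of_real_diff)
qed


lemma continuous_on_iff:
  "continuous_on s f \<longleftrightarrow>
    (\<forall>x\<in>s. \<forall>e>0. \<exists>d>0. \<forall>x'\<in>s. dist x' x < d \<longrightarrow> dist (f x') (f x) < (e::real))"
proof -
  have "(\<exists>d>0. \<forall>x'\<in>s. x' \<noteq> x \<and> dist x' x < d \<longrightarrow> dist (f x') (f x) < e) \<longleftrightarrow>
        (\<exists>d>0. \<forall>x'\<in>s. dist x' x < d \<longrightarrow> dist (f x') (f x) < e)" if "e > 0" for x e
  proof
    assume "\<exists>d>0. \<forall>x'\<in>s. x' \<noteq> x \<and> dist x' x < d \<longrightarrow> dist (f x') (f x) < e"
    then obtain d where "d > 0" "\<forall>x'\<in>s. x' \<noteq> x \<and> dist x' x < d \<longrightarrow> dist (f x') (f x) < e" by blast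
    then have "\<forall>x'\<in>s. dist x' x < d \<longrightarrow> dist (f x') (f x) < e"
      using that by (metis dist_self)
    with \<open>d > 0\<close> show "\<exists>d>0. \<forall>x'\<in>s. dist x' x < d \<longrightarrow> dist (f x') (f x) < e" by blast
  qed blast
  then show ?thesis unfolding continuous_on_def tendsto_iff eventually_at by simp
qed

lemma mdist_nonneg: "mdist d X Y \<ge> 0" unfolding mdist_def by (intro sum_nonneg) auto

lemma state_carrier: "is_state d X \<Longrightarrow> X \<in> carrier_mat d d"
  unfolding is_state_def psd_def by auto

lemma depol_cont:
  assumes cf: "continuous_on_states d f" and x: "is_state d x" and y: "is_state d y"
    and s: "s > 0" and d: "d > 0"
  shows "continuous_on {0..1} (\<lambda>a. f (depol d a s x) (depol d a s y))"
  unfolding continuous_on_iff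
proof (intro ballI allI impI)
  fix a0 :: real and e :: real assume a0: "a0 \<in> {0..1}" and e: "e > 0"
  let ?Dx = "depol d a0 s x" and ?Dy = "depol d a0 s y"
  have sx: "is_state d ?Dx" and sy: "is_state d ?Dy"
    using a0 x y d s by (auto intro!: depol_state)
  obtain \<delta> where dpos: "\<delta> > 0" and H: "\<And>\<rho>' \<sigma>'. is_state d \<rho>' \<Longrightarrow> is_state d \<sigma>' \<Longrightarrow>
      mdist d \<rho>' ?Dx < \<delta> \<Longrightarrow> mdist d \<sigma>' ?Dy < \<delta> \<Longrightarrow> \<bar>f \<rho>' \<sigma>' - f ?Dx ?Dy\<bar> < e"
  proof -
    have "\<forall>e>0. \<exists>\<delta>>0. \<forall>\<rho>' \<sigma>'. is_state d \<rho>' \<longrightarrow> is_state d \<sigma>' \<longrightarrow>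
            mdist d \<rho>' ?Dx < \<delta> \<longrightarrow> mdist d \<sigma>' ?Dy < \<delta> \<longrightarrow> \<bar>f \<rho>' \<sigma>' - f ?Dx ?Dy\<bar> < e"
      using cf sx sy unfolding continuous_on_states_def by blast
    then show ?thesis using e that by blast
  qed
  define Kx where "Kx = mdist d x ((mtrace x / of_nat d) \<cdot>\<^sub>m 1\<^sub>m d)"
  define Ky where "Ky = mdist d y ((mtrace y / of_nat d) \<cdot>\<^sub>m 1\<^sub>m d)"
  define K where "K = Kx + Ky + 1"
  have Kx0: "Kx \<ge> 0" and Ky0: "Ky \<ge> 0" unfolding Kx_def Ky_def by (auto intro: mdist_nonneg)
  then have Kpos: "K > 0" unfolding K_def by simp
  have pc: "continuous_on {0..1::real} (\<lambda>a. a powr s)"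
    using s by (intro continuous_on_powr' continuous_on_id continuous_on_const) auto
  obtain \<eta> where epos: "\<eta> > 0" and HP: "\<And>a'. a' \<in> {0..1} \<Longrightarrow> dist a' a0 < \<eta> \<Longrightarrow>
      dist (a' powr s) (a0 powr s) < \<delta> / K"
  proof -
    have "\<delta> / K > 0" using dpos Kpos by simp
    then show ?thesis using pc a0 that unfolding continuous_on_iff by blast
  qed
  show "\<exists>\<eta>>0. \<forall>a'\<in>{0..1}. dist a' a0 < \<eta> \<longrightarrow>
      dist (f (depol d a' s x) (depol d a' s y)) (f ?Dx ?Dy) < e"
  proof (intro exI conjI ballI impI)
    show "\<eta> > 0" by (rule epos)
    fix a' assume a': "a' \<in> {0..1}" and da: "dist a' a0 < \<eta>"
    let ?q = "\<bar>a' powr s - a0 powr s\<bar>"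
    have q: "?q < \<delta> / K" using HP[OF a' da] by (simp add: dist_real_def)
    then have qK: "?q * K < \<delta>" using Kpos by (simp add: pos_less_divide_eq)
    have "mdist d (depol d a' s x) ?Dx = ?q * Kx"
      unfolding Kx_def using state_carrier[OF x] by (rule mdist_depol)
    also have "\<dots> \<le> ?q * K" unfolding K_def using Ky0 by (intro mult_left_mono) auto
    finally have m1: "mdist d (depol d a' s x) ?Dx < \<delta>" using qK by simp
    have "mdist d (depol d a' s y) ?Dy = ?q * Ky"
      unfolding Ky_def using state_carrier[OF y] by (rule mdist_depol)
    also have "\<dots> \<le> ?q * K" unfolding K_def using Kx0 by (intro mult_left_mono) auto
    finally have m2: "mdist d (depol d a' s y) ?Dy < \<delta>" using qK by simp
    have "is_state d (depol d a' s x)" "is_state d (depol d a' s y)"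
      using a' x y d s by (auto intro!: depol_state)
    from H[OF this m1 m2] show "dist (f (depol d a' s x) (depol d a' s y)) (f ?Dx ?Dy) < e"
      by (simp add: dist_real_def)
  qed
qed


definition pick :: "nat \<Rightarrow> (complex mat \<Rightarrow> complex mat \<Rightarrow> real) \<Rightarrow> real \<Rightarrow> complex mat \<Rightarrow> complex mat \<Rightarrow> real \<Rightarrow> real" where
  "pick d f s x y v = (SOME a. 0 \<le> a \<and> a \<le> 1 \<and> f (depol d a s x) (depol d a s y) = v)"

fun seqp :: "nat \<Rightarrow> (complex mat \<Rightarrow> complex mat \<Rightarrow> real) \<Rightarrow> (nat \<Rightarrow> real) \<Rightarrow> (nat \<Rightarrow> real)
   \<Rightarrow> complex mat \<Rightarrow> complex mat \<Rightarrow> nat \<Rightarrow> complex mat \<times> complex mat" where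
  "seqp d f t F x y 0 = (x, y)"
| "seqp d f t F x y (Suc i) =
     (let u = fst (seqp d f t F x y i); w = snd (seqp d f t F x y i);
          a = pick d f (t (Suc i) - t i) u w (F (Suc i))
      in (depol d a (t (Suc i) - t i) u, depol d a (t (Suc i) - t i) w))"

theorem mainTheorem8:
  fixes d :: nat
    and f :: "complex mat \<Rightarrow> complex mat \<Rightarrow> real"
    and \<Lambda> :: "real \<Rightarrow> complex mat \<Rightarrow> complex mat"
    and \<rho> \<sigma> :: "complex mat"
    and t :: "nat \<Rightarrow> real"
  assumes "d \<ge> 2"
    and "contractive d f"
    and "continuous_on_states d f"
    and "\<forall>s \<ge> 0. CPTP d (\<Lambda> s)"
    and "\<forall>X \<in> carrier_mat d d. \<Lambda> 0 X = X"
    and "is_state d \<rho>" and "is_state d \<sigma>"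
    and "t 0 = 0" and "strict_mono t"
    and "\<forall>i. f (\<Lambda> (t (Suc i)) \<rho>) (\<Lambda> (t (Suc i)) \<sigma>) \<le> f (\<Lambda> (t i) \<rho>) (\<Lambda> (t i) \<sigma>)"
  shows "\<exists>a :: nat \<Rightarrow> real. (\<forall>i. 0 \<le> a i \<and> a i \<le> 1) \<and>
           (\<forall>i. f (depol_evol d a t \<rho> i) (depol_evol d a t \<sigma> i) = f (\<Lambda> (t i) \<rho>) (\<Lambda> (t i) \<sigma>))"
proof -
  note A = assms
  have d0: "d > 0" using A(1) by simp
  define F where "F i = f (\<Lambda> (t i) \<rho>) (\<Lambda> (t i) \<sigma>)" for i
  define P where "P = seqp d f t F \<rho> \<sigma>"
  define s where "s i = t (Suc i) - t i" for i
  define a where "a i = pick d f (s i) (fst (P i)) (snd (P i)) (F (Suc i))" for i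
  have ev: "depol_evol d a t \<rho> i = fst (P i) \<and> depol_evol d a t \<sigma> i = snd (P i)" for i
    by (induction i) (simp_all add: P_def a_def s_def Let_def)
  have tpos: "t i \<ge> 0" for i
    using strict_mono_less_eq[OF A(9), of 0 i] A(8) by simp
  have spos: "s i > 0" for i
    using A(9) unfolding s_def by (simp add: strict_mono_def)
  have LS: "is_state d (\<Lambda> (t i) \<rho>)" "is_state d (\<Lambda> (t i) \<sigma>)" for i
    using A(4) tpos A(6,7) by (auto intro: CPTP_state)
  have Rconst: "R d x = R d y" if "is_state d x" "is_state d y" for x y
    using that unfolding R_def is_state_def by simp
  have lowb: "f (R d u) (R d w) \<le> F i" if "is_state d u" "is_state d w" for u w i
  proof -
    have "f (R d u) (R d w) = f (R d (\<Lambda> (t i) \<rho>)) (R d (\<Lambda> (t i) \<sigma>))"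
      using Rconst[OF that(1) LS(1)[of i]] Rconst[OF that(2) LS(2)[of i]] by simp
    also have "\<dots> \<le> F i" unfolding F_def
      using A(2) R_CPTP[OF d0] LS unfolding contractive_def by blast
    finally show ?thesis .
  qed
  define Inv where "Inv i \<longleftrightarrow> is_state d (fst (P i)) \<and> is_state d (snd (P i)) \<and> f (fst (P i)) (snd (P i)) = F i" for i
  have step: "0 \<le> a i \<and> a i \<le> 1 \<and> f (depol d (a i) (s i) (fst (P i))) (depol d (a i) (s i) (snd (P i))) = F (Suc i)"
    if "Inv i" for i
  proof -
    let ?u = "fst (P i)" and ?w = "snd (P i)"
    let ?g = "\<lambda>b. f (depol d b (s i) ?u) (depol d b (s i) ?w)"
    have u: "is_state d ?u" and w: "is_state d ?w" and fu: "f ?u ?w = F i" using that unfolding Inv_def by auto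
    have g0: "?g 0 \<le> F (Suc i)"
      using depol0[OF spos state_carrier[OF u]] depol0[OF spos state_carrier[OF w]] lowb[OF u w] by simp
    have g1: "F (Suc i) \<le> ?g 1"
      using depol1[OF state_carrier[OF u]] depol1[OF state_carrier[OF w]] fu A(10) unfolding F_def by simp
    have "\<exists>b\<ge>0. b \<le> 1 \<and> ?g b = F (Suc i)"
      using IVT'[of ?g 0 "F (Suc i)" 1] g0 g1 depol_cont[OF A(3) u w spos d0] by simp
    then have "\<exists>b. 0 \<le> b \<and> b \<le> 1 \<and> ?g b = F (Suc i)" by blast
    then show ?thesis unfolding a_def pick_def by (rule someI_ex)
  qed
  have invall: "Inv i" for i
  proof (induction i)
    case 0
    have "F 0 = f \<rho> \<sigma>" unfolding F_def using A(5,6,7,8) state_carrier by simp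
    then show ?case unfolding Inv_def P_def using A(6,7) by simp
  next
    case (Suc i)
    have "P (Suc i) = (depol d (a i) (s i) (fst (P i)), depol d (a i) (s i) (snd (P i)))"
      by (simp add: P_def a_def s_def Let_def)
    moreover have st: "0 \<le> a i" "a i \<le> 1" "f (depol d (a i) (s i) (fst (P i))) (depol d (a i) (s i) (snd (P i))) = F (Suc i)"
      using step[OF Suc.IH] by auto
    moreover have "is_state d (fst (P i))" "is_state d (snd (P i))" using Suc.IH unfolding Inv_def by auto
    moreover have "s i \<ge> 0" using spos[of i] by simp
    ultimately show ?case unfolding Inv_def using d0 depol_state by simp
  qed
  show ?thesis
  proof (intro exI conjI allI)
    fix i
    show "0 \<le> a i" "a i \<le> 1" using step[OF invall[of i]] by auto
    show "f (depol_evol d a t \<rho> i) (depol_evol d a t \<sigma> i) = f (\<Lambda> (t i) \<rho>) (\<Lambda> (t i) \<sigma>)"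
      using ev[of i] invall[of i] unfolding Inv_def F_def by simp
  qed
qed

end
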